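(* In the reachability strategy-improvement algorithm described in the context, let $\gamma_i,\gamma_{i+1}$ be the player-1 selectors obtained at iterations $i$ and $i+1$, let $v_i=\mathrm{val}_1^{\overline{\gamma}_i}(\mathrm{Reach}(T))$, $v_{i+1}=\mathrm{val}_1^{\overline{\gamma}_{i+1}}(\mathrm{Reach}(T))$, and $I=\{s\in S:\mathrm{Pre}_1(v_i)(s)>v_i(s)\}$. Then $v_{i+1}(s)\ge\mathrm{Pre}_1(v_i)(s)$ for all $s\in S$; consequently $v_{i+1}(s)\ge v_i(s)$ for all $s\in S$ and $v_{i+1}(s)>v_i(s)$ for all $s\in I$.
   Context: Concurrent game structure $G=(S,M,\Gamma_1,\Gamma_2,\delta)$: finite states, finite moves, nonempty move sets $\Gamma_i(s)$, $\delta(s,a_1,a_2)\in\mathrm{Distr}(S)$ (simultaneous independent moves). Selectors assign to each state a distribution on available moves; $\overline{\xi}$ is the memoryless strategy playing $\xi$ forever; $\Pr_s^{\pi_1,\pi_2}$ is the induced measure on plays; $\mathrm{Reach}(X)$: plays visiting $X$. $\mathrm{val}_1^{\pi_1}(\mathrm{Reach}(T))(s)=\inf_{\pi_2}\Pr_s^{\pi_1,\pi_2}(\mathrm{Reach}(T))$, $\mathrm{val}_1(\mathrm{Reach}(T))=\sup_{\pi_1}\mathrm{val}_1^{\pi_1}(\mathrm{Reach}(T))$. For a valuation $v:S\to[0,1]$: $\mathrm{Pre}_{\xi_1,\xi_2}(v)(s)=\sum_{a,b}\sum_tv(t)\delta(s,a,b)(t)\xi_1(s)(a)\xi_2(s)(b)$,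 $\mathrm{Pre}_{1:\xi_1}(v)(s)=\inf_{\xi_2}\mathrm{Pre}_{\xi_1,\xi_2}(v)(s)$, $\mathrm{Pre}_1(v)(s)=\sup_{\xi_1}\mathrm{Pre}_{1:\xi_1}(v)(s)$. Fix $T\subseteq S$, $W_2=\{s:\mathrm{val}_1(\mathrm{Reach}(T))(s)=0\}$; all states of $T\cup W_2$ are absorbing. The algorithm: $\gamma_0$ is the uniform selector on $\Gamma_1(s)$, $v_i=\mathrm{val}_1^{\overline{\gamma}_i}(\mathrm{Reach}(T))$. At iteration $i$: $I'=\{s\in S\setminus(T\cup W_2):\mathrm{Pre}_1(v_i)(s)>v_i(s)\}$; $\xi_1$ is a selector with $\mathrm{Pre}_{1:\xi_1}(v_i)(s)=\mathrm{Pre}_1(v_i)(s)$ for $s\in I'$; $\gamma_{i+1}(s)=\gamma_i(s)$ for $s\notin I'$ and $\gamma_{i+1}(s)=\xi_1(s)$ for $s\in I'$; stop when $I'=\emptyset$. *)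

theory Defs
  imports "HOL-Probability.Probability"
begin

(* A concurrent game structure G = (S, M, Gamma1, Gamma2, delta) is represented by
   a finite state type 's, a finite move type 'm, move-set functions
   Gamma1 Gamma2 :: 's => 'm set and transition function delta :: 's => 'm => 'm => 's pmf. *)

definition sel :: "('s \<Rightarrow> 'm set) \<Rightarrow> ('s \<Rightarrow> 'm pmf) set" where
  "sel Gam = {\<xi>. \<forall>s. set_pmf (\<xi> s) \<subseteq> Gam s}"

(* (history dependent, randomized) strategies: map nonempty finite state sequences
   (last element = current state) to distributions on available moves *)
definition strat :: "('s \<Rightarrow> 'm set) \<Rightarrow> ('s list \<Rightarrow> 'm pmf) set" where
  "strat Gam = {\<pi>. \<forall>h. set_pmf (\<pi> h) \<subseteq> Gam (last h)}"

definition mless :: "('s \<Rightarrow> 'm pmf) \<Rightarrow> ('s list \<Rightarrow> 'm pmf)" where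
  "mless \<xi> = (\<lambda>h. \<xi> (last h))"

(* probability, under strategies pi1 pi2 and after history h, that the play visits T
   within the next n steps (counting the current state) *)
fun reach_upto :: "('s::finite \<Rightarrow> 'm::finite \<Rightarrow> 'm \<Rightarrow> 's pmf) \<Rightarrow> 's set
      \<Rightarrow> ('s list \<Rightarrow> 'm pmf) \<Rightarrow> ('s list \<Rightarrow> 'm pmf) \<Rightarrow> nat \<Rightarrow> 's list \<Rightarrow> real" where
  "reach_upto \<delta> T \<pi>1 \<pi>2 0 h = (if last h \<in> T then 1 else 0)"
| "reach_upto \<delta> T \<pi>1 \<pi>2 (Suc n) h = (if last h \<in> T then 1 else
     (\<Sum>a\<in>UNIV. \<Sum>b\<in>UNIV. \<Sum>t\<in>UNIV. pmf (\<pi>1 h) a * pmf (\<pi>2 h) b * pmf (\<delta> (last h) a b) t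
        * reach_upto \<delta> T \<pi>1 \<pi>2 n (h @ [t])))"

(* Pr_s^{pi1,pi2}(Reach T): by continuity of measure, the limit (supremum) of the
   probabilities of visiting T within n steps *)
definition reach_prob :: "('s::finite \<Rightarrow> 'm::finite \<Rightarrow> 'm \<Rightarrow> 's pmf) \<Rightarrow> 's set
      \<Rightarrow> ('s list \<Rightarrow> 'm pmf) \<Rightarrow> ('s list \<Rightarrow> 'm pmf) \<Rightarrow> 's \<Rightarrow> real" where
  "reach_prob \<delta> T \<pi>1 \<pi>2 s = (SUP n. reach_upto \<delta> T \<pi>1 \<pi>2 n [s])"

definition val1_str :: "('s \<Rightarrow> 'm set) \<Rightarrow> ('s::finite \<Rightarrow> 'm::finite \<Rightarrow> 'm \<Rightarrow> 's pmf) \<Rightarrow> 's set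
      \<Rightarrow> ('s list \<Rightarrow> 'm pmf) \<Rightarrow> 's \<Rightarrow> real" where
  "val1_str Gam2 \<delta> T \<pi>1 s = (INF \<pi>2\<in>strat Gam2. reach_prob \<delta> T \<pi>1 \<pi>2 s)"

definition val1 :: "('s \<Rightarrow> 'm set) \<Rightarrow> ('s \<Rightarrow> 'm set) \<Rightarrow> ('s::finite \<Rightarrow> 'm::finite \<Rightarrow> 'm \<Rightarrow> 's pmf)
      \<Rightarrow> 's set \<Rightarrow> 's \<Rightarrow> real" where
  "val1 Gam1 Gam2 \<delta> T s = (SUP \<pi>1\<in>strat Gam1. val1_str Gam2 \<delta> T \<pi>1 s)"

definition W2 :: "('s \<Rightarrow> 'm set) \<Rightarrow> ('s \<Rightarrow> 'm set) \<Rightarrow> ('s::finite \<Rightarrow> 'm::finite \<Rightarrow> 'm \<Rightarrow> 's pmf)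
      \<Rightarrow> 's set \<Rightarrow> 's set" where
  "W2 Gam1 Gam2 \<delta> T = {s. val1 Gam1 Gam2 \<delta> T s = 0}"

definition Pre_pair :: "('s::finite \<Rightarrow> 'm::finite \<Rightarrow> 'm \<Rightarrow> 's pmf) \<Rightarrow> ('s \<Rightarrow> 'm pmf) \<Rightarrow> ('s \<Rightarrow> 'm pmf)
      \<Rightarrow> ('s \<Rightarrow> real) \<Rightarrow> 's \<Rightarrow> real" where
  "Pre_pair \<delta> \<xi>1 \<xi>2 v s = (\<Sum>a\<in>UNIV. \<Sum>b\<in>UNIV. \<Sum>t\<in>UNIV.
      v t * pmf (\<delta> s a b) t * pmf (\<xi>1 s) a * pmf (\<xi>2 s) b)"

definition Pre1_sel :: "('s \<Rightarrow> 'm set) \<Rightarrow> ('s::finite \<Rightarrow> 'm::finite \<Rightarrow> 'm \<Rightarrow> 's pmf) \<Rightarrow> ('s \<Rightarrow> 'm pmf)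
      \<Rightarrow> ('s \<Rightarrow> real) \<Rightarrow> 's \<Rightarrow> real" where
  "Pre1_sel Gam2 \<delta> \<xi>1 v s = (INF \<xi>2\<in>sel Gam2. Pre_pair \<delta> \<xi>1 \<xi>2 v s)"

definition Pre1 :: "('s \<Rightarrow> 'm set) \<Rightarrow> ('s \<Rightarrow> 'm set) \<Rightarrow> ('s::finite \<Rightarrow> 'm::finite \<Rightarrow> 'm \<Rightarrow> 's pmf)
      \<Rightarrow> ('s \<Rightarrow> real) \<Rightarrow> 's \<Rightarrow> real" where
  "Pre1 Gam1 Gam2 \<delta> v s = (SUP \<xi>1\<in>sel Gam1. Pre1_sel Gam2 \<delta> \<xi>1 v s)"

definition unif_sel :: "('s \<Rightarrow> 'm set) \<Rightarrow> ('s \<Rightarrow> 'm pmf)" where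
  "unif_sel Gam1 = (\<lambda>s. pmf_of_set (Gam1 s))"

definition vsel :: "('s \<Rightarrow> 'm set) \<Rightarrow> ('s::finite \<Rightarrow> 'm::finite \<Rightarrow> 'm \<Rightarrow> 's pmf) \<Rightarrow> 's set
      \<Rightarrow> ('s \<Rightarrow> 'm pmf) \<Rightarrow> 's \<Rightarrow> real" where
  "vsel Gam2 \<delta> T \<gamma> = val1_str Gam2 \<delta> T (mless \<gamma>)"

definition Iprime :: "('s \<Rightarrow> 'm set) \<Rightarrow> ('s \<Rightarrow> 'm set) \<Rightarrow> ('s::finite \<Rightarrow> 'm::finite \<Rightarrow> 'm \<Rightarrow> 's pmf)
      \<Rightarrow> 's set \<Rightarrow> ('s \<Rightarrow> 'm pmf) \<Rightarrow> 's set" where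
  "Iprime Gam1 Gam2 \<delta> T \<gamma> = {s. s \<notin> T \<union> W2 Gam1 Gam2 \<delta> T \<and>
      Pre1 Gam1 Gam2 \<delta> (vsel Gam2 \<delta> T \<gamma>) s > vsel Gam2 \<delta> T \<gamma> s}"

definition improve_step :: "('s \<Rightarrow> 'm set) \<Rightarrow> ('s \<Rightarrow> 'm set) \<Rightarrow> ('s::finite \<Rightarrow> 'm::finite \<Rightarrow> 'm \<Rightarrow> 's pmf)
      \<Rightarrow> 's set \<Rightarrow> ('s \<Rightarrow> 'm pmf) \<Rightarrow> ('s \<Rightarrow> 'm pmf) \<Rightarrow> bool" where
  "improve_step Gam1 Gam2 \<delta> T \<gamma> \<gamma>' \<longleftrightarrow>
     (let I' = Iprime Gam1 Gam2 \<delta> T \<gamma>; v = vsel Gam2 \<delta> T \<gamma> in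
      I' \<noteq> {} \<and>
      (\<exists>\<xi>1\<in>sel Gam1. (\<forall>s\<in>I'. Pre1_sel Gam2 \<delta> \<xi>1 v s = Pre1 Gam1 Gam2 \<delta> v s) \<and>
         \<gamma>' = (\<lambda>s. if s \<in> I' then \<xi>1 s else \<gamma> s)))"

inductive alg_iter :: "('s \<Rightarrow> 'm set) \<Rightarrow> ('s \<Rightarrow> 'm set) \<Rightarrow> ('s::finite \<Rightarrow> 'm::finite \<Rightarrow> 'm \<Rightarrow> 's pmf)
      \<Rightarrow> 's set \<Rightarrow> ('s \<Rightarrow> 'm pmf) \<Rightarrow> bool"
  for Gam1 Gam2 \<delta> T where
  init: "alg_iter Gam1 Gam2 \<delta> T (unif_sel Gam1)"
| step: "alg_iter Gam1 Gam2 \<delta> T \<gamma> \<Longrightarrow> improve_step Gam1 Gam2 \<delta> T \<gamma> \<gamma>'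
          \<Longrightarrow> alg_iter Gam1 Gam2 \<delta> T \<gamma>'"

end

theory Submission
  imports Defs
begin

definition Lop :: "('s::finite \<Rightarrow> 'm::finite \<Rightarrow> 'm \<Rightarrow> 's pmf) \<Rightarrow> ('s \<Rightarrow> 'm pmf) \<Rightarrow> 'm \<Rightarrow> ('s \<Rightarrow> real) \<Rightarrow> 's \<Rightarrow> real" where
  "Lop \<delta> g b v s = (\<Sum>a\<in>UNIV. \<Sum>t\<in>UNIV. v t * pmf (\<delta> s a b) t * pmf (g s) a)"

lemma sum_pmf_UNIV: "(\<Sum>x\<in>(UNIV::'a::finite set). pmf p x) = 1"
  by (rule sum_pmf_eq_1) auto

lemma Lop_mono: "(\<And>t. v t \<le> v' t) \<Longrightarrow> Lop \<delta> g b v s \<le> Lop \<delta> g b v' s"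
  unfolding Lop_def by (intro sum_mono mult_right_mono) auto

lemma Lop_const: "Lop \<delta> g b (\<lambda>_. c) s = c"
proof -
  have "Lop \<delta> g b (\<lambda>_. c) s = (\<Sum>a\<in>UNIV. c * pmf (g s) a * (\<Sum>t\<in>UNIV. pmf (\<delta> s a b) t))"
    unfolding Lop_def by (simp add: sum_distrib_left sum_distrib_right mult_ac)
  also have "\<dots> = c" by (simp add: sum_pmf_UNIV flip: sum_distrib_left)
  finally show ?thesis .
qed

lemma Lop_diff: "Lop \<delta> g b (\<lambda>t. v t - v' t) s = Lop \<delta> g b v s - Lop \<delta> g b v' s"
  unfolding Lop_def by (simp add: sum_subtractf left_diff_distrib)

lemma Lop_le: "(\<And>t. v t \<le> M) \<Longrightarrow> Lop \<delta> g b v s \<le> M"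
  using Lop_mono[of v "\<lambda>_. M"] Lop_const by metis

lemma Lop_ge: "(\<And>t. M \<le> v t) \<Longrightarrow> M \<le> Lop \<delta> g b v s"
  using Lop_mono[of "\<lambda>_. M" v] Lop_const by metis

lemma Pre_pair_Lop: "Pre_pair \<delta> \<xi>1 \<xi>2 v s = (\<Sum>b\<in>UNIV. pmf (\<xi>2 s) b * Lop \<delta> \<xi>1 b v s)"
proof -
  have "(\<Sum>b\<in>UNIV. pmf (\<xi>2 s) b * Lop \<delta> \<xi>1 b v s) =
    (\<Sum>b\<in>UNIV. \<Sum>a\<in>UNIV. \<Sum>t\<in>UNIV. v t * pmf (\<delta> s a b) t * pmf (\<xi>1 s) a * pmf (\<xi>2 s) b)"
    unfolding Lop_def by (simp add: sum_distrib_left sum_distrib_right mult_ac)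
  also have "\<dots> = (\<Sum>a\<in>UNIV. \<Sum>b\<in>UNIV. \<Sum>t\<in>UNIV. v t * pmf (\<delta> s a b) t * pmf (\<xi>1 s) a * pmf (\<xi>2 s) b)"
    by (rule sum.swap)
  finally show ?thesis unfolding Pre_pair_def by simp
qed

lemma Pre_pair_ret: "\<xi>2 s = return_pmf b \<Longrightarrow> Pre_pair \<delta> \<xi>1 \<xi>2 v s = Lop \<delta> \<xi>1 b v s"
  by (simp add: Pre_pair_Lop indicator_def)

lemma Lop_add_const: "Lop \<delta> g b (\<lambda>t. v t + c) s = Lop \<delta> g b v s + c"
  using Lop_diff[of \<delta> g b "\<lambda>t. v t + c" "\<lambda>_. c" s] Lop_const[of \<delta> g b c s] by simp

lemma reach_bounds: "0 \<le> reach_upto \<delta> T \<pi>1 \<pi>2 n h \<and> reach_upto \<delta> T \<pi>1 \<pi>2 n h \<le> 1"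
proof (induction n arbitrary: h)
  case 0
  then show ?case by simp
next
  case (Suc n)
  let ?p = "\<lambda>a b t. pmf (\<pi>1 h) a * pmf (\<pi>2 h) b * pmf (\<delta> (last h) a b) t"
  let ?S = "(\<Sum>a\<in>UNIV. \<Sum>b\<in>UNIV. \<Sum>t\<in>UNIV. ?p a b t * reach_upto \<delta> T \<pi>1 \<pi>2 n (h @ [t]))"
  have "?S \<le> (\<Sum>a\<in>UNIV. \<Sum>b\<in>UNIV. \<Sum>t\<in>UNIV. ?p a b t)"
  proof (intro sum_mono)
    fix a b t
    have "reach_upto \<delta> T \<pi>1 \<pi>2 n (h @ [t]) \<le> 1" using Suc.IH by blast
    moreover have "0 \<le> ?p a b t" by (intro mult_nonneg_nonneg pmf_nonneg)
    ultimately show "?p a b t * reach_upto \<delta> T \<pi>1 \<pi>2 n (h @ [t]) \<le> ?p a b t"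
      by (rule mult_left_le)
  qed
  also have "\<dots> = 1"
  proof -
    have e1: "(\<Sum>t\<in>UNIV. ?p a b t) = pmf (\<pi>1 h) a * pmf (\<pi>2 h) b" for a b
      using sum_distrib_left[of "pmf (\<pi>1 h) a * pmf (\<pi>2 h) b" "pmf (\<delta> (last h) a b)" UNIV]
      by (simp add: sum_pmf_UNIV)
    have e2: "(\<Sum>b\<in>UNIV. pmf (\<pi>1 h) a * pmf (\<pi>2 h) b) = pmf (\<pi>1 h) a" for a
      using sum_distrib_left[of "pmf (\<pi>1 h) a" "pmf (\<pi>2 h)" UNIV]
      by (simp add: sum_pmf_UNIV)
    show ?thesis by (simp only: e1 e2 sum_pmf_UNIV)
  qed
  finally have 1: "?S \<le> 1" .
  have 2: "0 \<le> ?S"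
  proof (intro sum_nonneg)
    fix a b t
    have "0 \<le> reach_upto \<delta> T \<pi>1 \<pi>2 n (h @ [t])" using Suc.IH by blast
    then show "0 \<le> ?p a b t * reach_upto \<delta> T \<pi>1 \<pi>2 n (h @ [t])"
      by (intro mult_nonneg_nonneg pmf_nonneg)
  qed
  show ?case using 1 2 by simp
qed

lemma reach_cong:
  "(\<And>h'. \<pi>1 (h @ h') = \<pi>1' (h @ h')) \<Longrightarrow> (\<And>h'. \<pi>2 (h @ h') = \<pi>2' (h @ h')) \<Longrightarrow>
   reach_upto \<delta> T \<pi>1 \<pi>2 n h = reach_upto \<delta> T \<pi>1' \<pi>2' n h"
proof (induction n arbitrary: h)
  case 0
  then show ?case by simp
next
  case (Suc n)
  have e1: "\<pi>1 h = \<pi>1' h" "\<pi>2 h = \<pi>2' h" using Suc.prems[of "[]"] by auto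
  have "reach_upto \<delta> T \<pi>1 \<pi>2 n (h @ [t]) = reach_upto \<delta> T \<pi>1' \<pi>2' n (h @ [t])" for t
    by (rule Suc.IH) (use Suc.prems[of "t # _"] in auto)
  then show ?case by (simp add: e1)
qed

lemma reach_shift:
  "h \<noteq> [] \<Longrightarrow> reach_upto \<delta> T \<pi>1 \<pi>2 n (x # h) = reach_upto \<delta> T (\<lambda>h. \<pi>1 (x # h)) (\<lambda>h. \<pi>2 (x # h)) n h"
proof (induction n arbitrary: h)
  case 0
  then show ?case by simp
next
  case (Suc n)
  have "reach_upto \<delta> T \<pi>1 \<pi>2 n (x # (h @ [t])) = reach_upto \<delta> T (\<lambda>h. \<pi>1 (x # h)) (\<lambda>h. \<pi>2 (x # h)) n (h @ [t])" for t
    by (rule Suc.IH) simp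
  then show ?case using Suc.prems by simp
qed

lemma reach_prob_bounds: "0 \<le> reach_prob \<delta> T \<pi>1 \<pi>2 s \<and> reach_prob \<delta> T \<pi>1 \<pi>2 s \<le> 1"
proof -
  have bdd: "bdd_above (range (\<lambda>n. reach_upto \<delta> T \<pi>1 \<pi>2 n [s]))"
    by (rule bdd_aboveI2[where M=1]) (simp add: reach_bounds)
  have "0 \<le> reach_upto \<delta> T \<pi>1 \<pi>2 0 [s]" using reach_bounds by blast
  also have "\<dots> \<le> reach_prob \<delta> T \<pi>1 \<pi>2 s" unfolding reach_prob_def by (rule cSUP_upper[OF _ bdd]) simp
  moreover have "reach_prob \<delta> T \<pi>1 \<pi>2 s \<le> 1"
    unfolding reach_prob_def by (rule cSUP_least) (simp_all add: reach_bounds)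
  ultimately show ?thesis by simp
qed

lemma reach_le_prob: "reach_upto \<delta> T \<pi>1 \<pi>2 n [s] \<le> reach_prob \<delta> T \<pi>1 \<pi>2 s"
proof -
  have bdd: "bdd_above (range (\<lambda>n. reach_upto \<delta> T \<pi>1 \<pi>2 n [s]))"
    by (rule bdd_aboveI2[where M=1]) (simp add: reach_bounds)
  show ?thesis unfolding reach_prob_def by (rule cSUP_upper[OF _ bdd]) simp
qed

lemma strat_ne: "(\<And>s. Gam s \<noteq> {}) \<Longrightarrow> (\<lambda>h. pmf_of_set (Gam (last h))) \<in> strat (Gam :: 's \<Rightarrow> 'm::finite set)"
  unfolding strat_def by (simp add: set_pmf_of_set)

lemma ne_lemma: "x \<in> A \<Longrightarrow> A \<noteq> {}" by auto

lemma val_bounds: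
  assumes "\<And>s. Gam2 s \<noteq> {}"
  shows "0 \<le> val1_str Gam2 \<delta> T \<pi>1 s \<and> val1_str Gam2 \<delta> T \<pi>1 s \<le> 1"
proof -
  have ne: "strat Gam2 \<noteq> {}" using strat_ne[of Gam2, OF assms] by (rule ne_lemma)
  have bdd: "bdd_below ((\<lambda>\<pi>2. reach_prob \<delta> T \<pi>1 \<pi>2 s) ` strat Gam2)"
    by (rule bdd_belowI2[where m=0]) (simp add: reach_prob_bounds)
  obtain p where p: "p \<in> strat Gam2" using ne by blast
  have "val1_str Gam2 \<delta> T \<pi>1 s \<le> reach_prob \<delta> T \<pi>1 p s"
    unfolding val1_str_def by (rule cINF_lower[OF bdd p])
  moreover have "reach_prob \<delta> T \<pi>1 p s \<le> 1" using reach_prob_bounds[of \<delta> T \<pi>1 p s] by (rule conjunct2)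
  moreover have "0 \<le> val1_str Gam2 \<delta> T \<pi>1 s"
    unfolding val1_str_def by (rule cINF_greatest[OF ne]) (simp add: reach_prob_bounds)
  ultimately show ?thesis by linarith
qed

lemma val_le_reach:
  assumes "\<pi>2 \<in> strat Gam2"
  shows "val1_str Gam2 \<delta> T \<pi>1 s \<le> reach_prob \<delta> T \<pi>1 \<pi>2 s"
proof -
  have bdd: "bdd_below ((\<lambda>\<pi>2. reach_prob \<delta> T \<pi>1 \<pi>2 s) ` strat Gam2)"
    by (rule bdd_belowI2[where m=0]) (simp add: reach_prob_bounds)
  show ?thesis unfolding val1_str_def by (rule cINF_lower[OF bdd assms])
qed

lemma sum_ret_delta:
  "(\<Sum>b'\<in>(UNIV::'m::finite set). \<Sum>t\<in>(UNIV::'s::finite set). (pa::real) * pmf (return_pmf b) b' * pmf (d b') t * r t)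
   = (\<Sum>t\<in>UNIV. pa * pmf (d b) t * r t)"
proof -
  have "(\<Sum>b'\<in>(UNIV::'m set). \<Sum>t\<in>(UNIV::'s set). pa * pmf (return_pmf b) b' * pmf (d b') t * r t)
     = (\<Sum>b'\<in>(UNIV::'m set). if b' = b then (\<Sum>t\<in>UNIV. pa * pmf (d b') t * r t) else 0)"
    by (rule sum.cong) (auto simp: indicator_def)
  also have "\<dots> = (\<Sum>t\<in>UNIV. pa * pmf (d b) t * r t)" by simp
  finally show ?thesis .
qed

lemma val_step:
  fixes g :: "'s::finite \<Rightarrow> 'm::finite pmf"
  assumes ne2: "\<And>s. Gam2 s \<noteq> {}" and sT: "s \<notin> T" and b: "b \<in> Gam2 s"
  shows "val1_str Gam2 \<delta> T (mless g) s \<le> Lop \<delta> g b (val1_str Gam2 \<delta> T (mless g)) s"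
proof -
  define u where "u = val1_str Gam2 \<delta> T (mless g)"
  have u_nn: "0 \<le> u t" for t unfolding u_def using val_bounds[OF ne2] by (rule conjunct1)
  have "u s \<le> Lop \<delta> g b u s + e" if e: "e > 0" for e
  proof -
    have "\<exists>\<pi>\<in>strat Gam2. reach_prob \<delta> T (mless g) \<pi> t < u t + e" for t
    proof -
      have bdd: "bdd_below ((\<lambda>\<pi>2. reach_prob \<delta> T (mless g) \<pi>2 t) ` strat Gam2)"
        by (rule bdd_belowI2[where m=0]) (simp add: reach_prob_bounds)
      have "(INF \<pi>\<in>strat Gam2. reach_prob \<delta> T (mless g) \<pi> t) < u t + e"
        using e unfolding u_def val1_str_def by simp
      then show ?thesis using cINF_less_iff[OF strat_ne[of Gam2, OF ne2, THEN ne_lemma] bdd] by simp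
    qed
    then obtain P where P: "\<And>t. P t \<in> strat Gam2" "\<And>t. reach_prob \<delta> T (mless g) (P t) t < u t + e"
      by metis
    define \<pi>2 where "\<pi>2 = (\<lambda>h. if h = [s] then return_pmf b else if 2 \<le> length h then P (h!1) (tl h)
       else pmf_of_set (Gam2 (last h)))"
    have \<pi>2s: "\<pi>2 \<in> strat Gam2"
      unfolding strat_def
    proof (intro CollectI allI)
      fix h :: "'s list"
      show "set_pmf (\<pi>2 h) \<subseteq> Gam2 (last h)"
      proof (cases "h = [s]")
        case True then show ?thesis using b by (simp add: \<pi>2_def)
      next
        case F: False
        show ?thesis
        proof (cases "2 \<le> length h")
          case True
          then have "last (tl h) = last h" by (intro last_tl) (cases h, auto)
          moreover have "set_pmf (P (h!1) (tl h)) \<subseteq> Gam2 (last (tl h))"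
            using P(1)[of "h!1"] unfolding strat_def by simp
          ultimately show ?thesis using F True by (simp add: \<pi>2_def)
        next
          case False
          then show ?thesis using F ne2[of "last h"] by (simp add: \<pi>2_def set_pmf_of_set)
        qed
      qed
    qed
    have rs: "reach_upto \<delta> T (mless g) \<pi>2 m [s,t] \<le> u t + e" for m t
    proof -
      have "reach_upto \<delta> T (mless g) \<pi>2 m (s#[t]) =
          reach_upto \<delta> T (\<lambda>h. mless g (s#h)) (\<lambda>h. \<pi>2 (s#h)) m [t]" by (rule reach_shift) simp
      also have "\<dots> = reach_upto \<delta> T (mless g) (P t) m [t]"
        by (rule reach_cong) (simp_all add: mless_def \<pi>2_def)
      also have "\<dots> \<le> reach_prob \<delta> T (mless g) (P t) t" by (rule reach_le_prob)
      finally show ?thesis using P(2)[of t] by simp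
    qed
    have "reach_upto \<delta> T (mless g) \<pi>2 n [s] \<le> Lop \<delta> g b u s + e" for n
    proof (cases n)
      case 0
      have "0 \<le> Lop \<delta> g b u s" by (rule Lop_ge) (rule u_nn)
      then show ?thesis using 0 sT e by simp
    next
      case (Suc m)
      have "reach_upto \<delta> T (mless g) \<pi>2 n [s] = (\<Sum>a\<in>UNIV. \<Sum>b'\<in>UNIV. \<Sum>t\<in>UNIV.
          pmf (g s) a * pmf (return_pmf b) b' * pmf (\<delta> s a b') t * reach_upto \<delta> T (mless g) \<pi>2 m [s,t])"
        using sT Suc by (simp add: mless_def \<pi>2_def)
      also have "\<dots> = (\<Sum>a\<in>UNIV. \<Sum>t\<in>UNIV. pmf (g s) a * pmf (\<delta> s a b) t * reach_upto \<delta> T (mless g) \<pi>2 m [s,t])"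
        by (rule sum.cong[OF refl]) (rule sum_ret_delta)
      also have "\<dots> \<le> (\<Sum>a\<in>UNIV. \<Sum>t\<in>UNIV. pmf (g s) a * pmf (\<delta> s a b) t * (u t + e))"
      proof (intro sum_mono)
        fix a t
        show "pmf (g s) a * pmf (\<delta> s a b) t * reach_upto \<delta> T (mless g) \<pi>2 m [s,t] \<le>
              pmf (g s) a * pmf (\<delta> s a b) t * (u t + e)"
          by (rule mult_left_mono[OF rs]) (intro mult_nonneg_nonneg pmf_nonneg)
      qed
      also have "\<dots> = Lop \<delta> g b (\<lambda>t. u t + e) s"
        unfolding Lop_def by (intro sum.cong refl) (simp only: mult.commute mult.left_commute)
      also have "\<dots> = Lop \<delta> g b u s + e" by (rule Lop_add_const)
      finally show ?thesis .
    qed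
    then have "reach_prob \<delta> T (mless g) \<pi>2 s \<le> Lop \<delta> g b u s + e"
      unfolding reach_prob_def by (intro cSUP_least) simp_all
    moreover have "u s \<le> reach_prob \<delta> T (mless g) \<pi>2 s"
      unfolding u_def by (rule val_le_reach[OF \<pi>2s])
    ultimately show ?thesis by linarith
  qed
  then have "u s \<le> Lop \<delta> g b u s" by (rule field_le_epsilon)
  then show ?thesis unfolding u_def .
qed

fun wit :: "('s::finite \<Rightarrow> 'm::finite \<Rightarrow> 'm \<Rightarrow> 's pmf) \<Rightarrow> 's set \<Rightarrow> ('s \<Rightarrow> 'm set) \<Rightarrow> ('s \<Rightarrow> 'm pmf)
   \<Rightarrow> nat \<Rightarrow> 's \<Rightarrow> real" where
  "wit \<delta> T Gam2 g 0 s = (if s \<in> T then 1 else 0)"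
| "wit \<delta> T Gam2 g (Suc n) s = (if s \<in> T then 1 else Min ((\<lambda>b. Lop \<delta> g b (wit \<delta> T Gam2 g n) s) ` Gam2 s))"

lemma Min_img_le: "b \<in> (B::'m::finite set) \<Longrightarrow> Min (f ` B) \<le> (f b :: real)"
  by (rule Min_le) auto

lemma Min_img_ge: "B \<noteq> {} \<Longrightarrow> (\<And>b. b \<in> (B::'m::finite set) \<Longrightarrow> x \<le> f b) \<Longrightarrow> (x::real) \<le> Min (f ` B)"
  by (subst Min_ge_iff) auto

lemma wit_bounds:
  assumes ne2: "\<And>s. Gam2 s \<noteq> {}"
  shows "0 \<le> wit \<delta> T Gam2 g n s \<and> wit \<delta> T Gam2 g n s \<le> 1"
proof (induction n arbitrary: s)
  case 0
  then show ?case by simp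
next
  case (Suc n)
  obtain b where b: "b \<in> Gam2 s" using ne2[of s] by auto
  have 1: "0 \<le> Min ((\<lambda>b. Lop \<delta> g b (wit \<delta> T Gam2 g n) s) ` Gam2 s)"
    by (rule Min_img_ge[OF ne2]) (rule Lop_ge, use Suc.IH in blast)
  have "Min ((\<lambda>b. Lop \<delta> g b (wit \<delta> T Gam2 g n) s) ` Gam2 s) \<le> Lop \<delta> g b (wit \<delta> T Gam2 g n) s"
    by (rule Min_img_le[OF b])
  also have "\<dots> \<le> 1" by (rule Lop_le) (use Suc.IH in blast)
  finally show ?case using 1 by simp
qed

lemma wit_mono:
  assumes ne2: "\<And>s. Gam2 s \<noteq> {}"
  shows "wit \<delta> T Gam2 g n s \<le> wit \<delta> T Gam2 g (Suc n) s"
proof (induction n arbitrary: s)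
  case 0
  have "0 \<le> wit \<delta> T Gam2 g 1 s" using wit_bounds[OF ne2] by (rule conjunct1)
  then show ?case by (cases "s \<in> T") simp_all
next
  case (Suc n)
  have "Min ((\<lambda>b. Lop \<delta> g b (wit \<delta> T Gam2 g n) s) ` Gam2 s)
     \<le> Min ((\<lambda>b. Lop \<delta> g b (wit \<delta> T Gam2 g (Suc n)) s) ` Gam2 s)"
  proof (rule Min_img_ge[OF ne2])
    fix b assume b: "b \<in> Gam2 s"
    have "Min ((\<lambda>b. Lop \<delta> g b (wit \<delta> T Gam2 g n) s) ` Gam2 s) \<le> Lop \<delta> g b (wit \<delta> T Gam2 g n) s"
      by (rule Min_img_le[OF b])
    also have "\<dots> \<le> Lop \<delta> g b (wit \<delta> T Gam2 g (Suc n)) s" by (rule Lop_mono) (rule Suc.IH)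
    finally show "Min ((\<lambda>b. Lop \<delta> g b (wit \<delta> T Gam2 g n) s) ` Gam2 s) \<le> Lop \<delta> g b (wit \<delta> T Gam2 g (Suc n)) s" .
  qed
  then show ?case by (simp only: wit.simps) simp
qed

lemma wit_le_reach:
  assumes ne2: "\<And>s. Gam2 s \<noteq> {}" and pi: "\<pi>2 \<in> strat Gam2"
  shows "wit \<delta> T Gam2 g n (last h) \<le> reach_upto \<delta> T (mless g) \<pi>2 n h"
proof (induction n arbitrary: h)
  case 0
  then show ?case by simp
next
  case (Suc n)
  show ?case
  proof (cases "last h \<in> T")
    case True then show ?thesis by simp
  next
    case nT: False
    let ?s = "last h"
    let ?m = "Min ((\<lambda>b. Lop \<delta> g b (wit \<delta> T Gam2 g n) ?s) ` Gam2 ?s)"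
    have "?m = (\<Sum>b\<in>UNIV. pmf (\<pi>2 h) b * ?m)"
      by (simp add: sum_distrib_right[symmetric] sum_pmf_UNIV)
    also have "\<dots> \<le> (\<Sum>b\<in>UNIV. pmf (\<pi>2 h) b * Lop \<delta> g b (wit \<delta> T Gam2 g n) ?s)"
    proof (rule sum_mono)
      fix b
      show "pmf (\<pi>2 h) b * ?m \<le> pmf (\<pi>2 h) b * Lop \<delta> g b (wit \<delta> T Gam2 g n) ?s"
      proof (cases "b \<in> set_pmf (\<pi>2 h)")
        case True
        then have "b \<in> Gam2 ?s" using pi unfolding strat_def by auto
        then show ?thesis by (intro mult_left_mono Min_img_le pmf_nonneg)
      next
        case False then show ?thesis by (simp add: set_pmf_iff)
      qed
    qed
    also have "\<dots> = Pre_pair \<delta> g (\<lambda>_. \<pi>2 h) (wit \<delta> T Gam2 g n) ?s"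
      by (simp add: Pre_pair_Lop)
    also have "\<dots> = (\<Sum>a\<in>UNIV. \<Sum>b\<in>UNIV. \<Sum>t\<in>UNIV. pmf (mless g h) a * pmf (\<pi>2 h) b * pmf (\<delta> ?s a b) t
        * wit \<delta> T Gam2 g n t)"
      unfolding Pre_pair_def mless_def by (intro sum.cong refl) (simp only: mult.commute mult.left_commute)
    also have "\<dots> \<le> (\<Sum>a\<in>UNIV. \<Sum>b\<in>UNIV. \<Sum>t\<in>UNIV. pmf (mless g h) a * pmf (\<pi>2 h) b * pmf (\<delta> ?s a b) t
        * reach_upto \<delta> T (mless g) \<pi>2 n (h @ [t]))"
    proof (intro sum_mono)
      fix a b t
      have "wit \<delta> T Gam2 g n t \<le> reach_upto \<delta> T (mless g) \<pi>2 n (h @ [t])"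
        using Suc.IH[of "h @ [t]"] by simp
      then show "pmf (mless g h) a * pmf (\<pi>2 h) b * pmf (\<delta> ?s a b) t * wit \<delta> T Gam2 g n t
        \<le> pmf (mless g h) a * pmf (\<pi>2 h) b * pmf (\<delta> ?s a b) t * reach_upto \<delta> T (mless g) \<pi>2 n (h @ [t])"
        by (rule mult_left_mono) (intro mult_nonneg_nonneg pmf_nonneg)
    qed
    also have "\<dots> = reach_upto \<delta> T (mless g) \<pi>2 (Suc n) h" using nT by simp
    finally show ?thesis using nT by simp
  qed
qed

lemma tendsto_Min_img:
  assumes "finite B" "B \<noteq> {}" "\<And>b. b \<in> B \<Longrightarrow> (\<lambda>n. f n b) \<longlonglongrightarrow> F b"
  shows "(\<lambda>n. Min ((\<lambda>b. f n b) ` B)) \<longlonglongrightarrow> (Min (F ` B) :: real)"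
  using assms
proof (induction B rule: finite_ne_induct)
  case (singleton x)
  then show ?case by simp
next
  case (insert x B)
  have "(\<lambda>n. min (f n x) (Min ((\<lambda>b. f n b) ` B))) \<longlonglongrightarrow> min (F x) (Min (F ` B))"
    by (intro tendsto_min insert.IH insert.prems) auto
  then show ?case using insert.hyps by (simp add: Min.insert)
qed

lemma wit_lim:
  assumes ne2: "\<And>s. Gam2 s \<noteq> {}"
  shows "(\<lambda>n. wit \<delta> T Gam2 g n s) \<longlonglongrightarrow> (SUP n. wit \<delta> T Gam2 g n s)"
proof (rule LIMSEQ_incseq_SUP)
  show "bdd_above (range (\<lambda>n. wit \<delta> T Gam2 g n s))"
    by (rule bdd_aboveI2[where M=1]) (simp add: wit_bounds[OF ne2])
  show "incseq (\<lambda>n. wit \<delta> T Gam2 g n s)"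
    by (rule incseq_SucI) (rule wit_mono[OF ne2])
qed

lemma ws_fix:
  assumes ne2: "\<And>s. Gam2 s \<noteq> {}" and nT: "s \<notin> T"
  shows "(SUP n. wit \<delta> T Gam2 g n s) = Min ((\<lambda>b. Lop \<delta> g b (\<lambda>t. SUP n. wit \<delta> T Gam2 g n t) s) ` Gam2 s)"
proof (rule LIMSEQ_unique)
  show "(\<lambda>n. wit \<delta> T Gam2 g (Suc n) s) \<longlonglongrightarrow> (SUP n. wit \<delta> T Gam2 g n s)"
    by (rule LIMSEQ_Suc[OF wit_lim[OF ne2]])
  have L: "(\<lambda>n. Lop \<delta> g b (wit \<delta> T Gam2 g n) s) \<longlonglongrightarrow> Lop \<delta> g b (\<lambda>t. SUP n. wit \<delta> T Gam2 g n t) s" for b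
    unfolding Lop_def by (intro tendsto_intros wit_lim[OF ne2])
  have "(\<lambda>n. Min ((\<lambda>b. Lop \<delta> g b (wit \<delta> T Gam2 g n) s) ` Gam2 s)) \<longlonglongrightarrow>
      Min ((\<lambda>b. Lop \<delta> g b (\<lambda>t. SUP n. wit \<delta> T Gam2 g n t) s) ` Gam2 s)"
    by (rule tendsto_Min_img[OF _ ne2 L]) simp
  then show "(\<lambda>n. wit \<delta> T Gam2 g (Suc n) s) \<longlonglongrightarrow> Min ((\<lambda>b. Lop \<delta> g b (\<lambda>t. SUP n. wit \<delta> T Gam2 g n t) s) ` Gam2 s)"
    using nT by simp
qed

lemma ws_le_val:
  assumes ne2: "\<And>s. Gam2 s \<noteq> {}"
  shows "(SUP n. wit \<delta> T Gam2 g n s) \<le> val1_str Gam2 \<delta> T (mless g) s"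
proof (rule cSUP_least)
  fix n
  have ne: "strat Gam2 \<noteq> {}" using strat_ne[of Gam2, OF ne2] by (rule ne_lemma)
  show "wit \<delta> T Gam2 g n s \<le> val1_str Gam2 \<delta> T (mless g) s"
    unfolding val1_str_def
  proof (rule cINF_greatest[OF ne])
    fix \<pi>2 assume p: "\<pi>2 \<in> strat Gam2"
    have "wit \<delta> T Gam2 g n (last [s]) \<le> reach_upto \<delta> T (mless g) \<pi>2 n [s]"
      by (rule wit_le_reach[OF ne2 p])
    also have "\<dots> \<le> reach_prob \<delta> T (mless g) \<pi>2 s" by (rule reach_le_prob)
    finally show "wit \<delta> T Gam2 g n s \<le> reach_prob \<delta> T (mless g) \<pi>2 s" by simp
  qed
qed simp

lemma ws_bounds:
  assumes ne2: "\<And>s. Gam2 s \<noteq> {}"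
  shows "wit \<delta> T Gam2 g n s \<le> (SUP n. wit \<delta> T Gam2 g n s)" "(SUP n. wit \<delta> T Gam2 g n s) \<le> 1"
proof -
  show "wit \<delta> T Gam2 g n s \<le> (SUP n. wit \<delta> T Gam2 g n s)"
    by (rule cSUP_upper) (simp, rule bdd_aboveI2[where M=1], simp add: wit_bounds[OF ne2])
  show "(SUP n. wit \<delta> T Gam2 g n s) \<le> 1"
    by (rule cSUP_least) (simp_all add: wit_bounds[OF ne2])
qed

lemma Lop_same: "g s = g' s \<Longrightarrow> Lop \<delta> g b v s = Lop \<delta> g' b v s"
  unfolding Lop_def by simp

lemma Pre_pair_nonneg: "(\<And>t. 0 \<le> v t) \<Longrightarrow> 0 \<le> Pre_pair \<delta> \<xi>1 \<xi>2 v s"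
  unfolding Pre_pair_Lop by (intro sum_nonneg mult_nonneg_nonneg pmf_nonneg Lop_ge) auto

lemma Pre1_sel_le:
  assumes "\<xi>2 \<in> sel Gam2" "\<And>t. 0 \<le> v t"
  shows "Pre1_sel Gam2 \<delta> \<xi>1 v s \<le> Pre_pair \<delta> \<xi>1 \<xi>2 v s"
proof -
  have bdd: "bdd_below ((\<lambda>\<xi>2. Pre_pair \<delta> \<xi>1 \<xi>2 v s) ` sel Gam2)"
    by (rule bdd_belowI2[where m=0]) (rule Pre_pair_nonneg[OF assms(2)])
  show ?thesis unfolding Pre1_sel_def by (rule cINF_lower[OF bdd assms(1)])
qed

lemma sel_ret:
  assumes ne2: "\<And>s. Gam2 s \<noteq> {}" and b: "b \<in> Gam2 s"
  shows "(\<lambda>s'. if s' = s then return_pmf b else pmf_of_set (Gam2 s')) \<in> sel (Gam2 :: 's \<Rightarrow> 'm::finite set)"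
  unfolding sel_def using b ne2 by (auto simp: set_pmf_of_set)

lemma sel_unif:
  assumes ne2: "\<And>s. Gam2 s \<noteq> {}"
  shows "(\<lambda>s'. pmf_of_set (Gam2 s')) \<in> sel (Gam2 :: 's \<Rightarrow> 'm::finite set)"
  unfolding sel_def using ne2 by (auto simp: set_pmf_of_set)

lemma Pre1_sel_le_Lop:
  assumes ne2: "\<And>s. Gam2 s \<noteq> {}" and b: "b \<in> Gam2 s" and v: "\<And>t. 0 \<le> v t"
  shows "Pre1_sel Gam2 \<delta> \<xi>1 v s \<le> Lop \<delta> \<xi>1 b v s"
proof -
  have "Pre1_sel Gam2 \<delta> \<xi>1 v s \<le> Pre_pair \<delta> \<xi>1 (\<lambda>s'. if s' = s then return_pmf b else pmf_of_set (Gam2 s')) v s"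
    by (rule Pre1_sel_le[OF _ v]) (rule sel_ret, rule ne2, rule b)
  also have "\<dots> = Lop \<delta> \<xi>1 b v s" by (rule Pre_pair_ret) simp
  finally show ?thesis .
qed

lemma Lop_zero:
  assumes nn: "\<And>t. 0 \<le> v t" and le: "Lop \<delta> g b v s \<le> 0"
    and a: "a \<in> set_pmf (g s)" and t: "t \<in> set_pmf (\<delta> s a b)"
  shows "v t = 0"
proof -
  have tn: "\<And>a t. 0 \<le> v t * pmf (\<delta> s a b) t * pmf (g s) a"
    using nn by (intro mult_nonneg_nonneg pmf_nonneg) auto
  have in_n: "\<And>a. 0 \<le> (\<Sum>t\<in>UNIV. v t * pmf (\<delta> s a b) t * pmf (g s) a)"
    using tn by (intro sum_nonneg) auto
  have "Lop \<delta> g b v s = 0" using le in_n unfolding Lop_def by (meson antisym sum_nonneg)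
  then have "(\<Sum>t\<in>UNIV. v t * pmf (\<delta> s a b) t * pmf (g s) a) = 0"
    unfolding Lop_def using in_n by (subst (asm) sum_nonneg_eq_0_iff) auto
  then have "v t * pmf (\<delta> s a b) t * pmf (g s) a = 0"
    using tn by (subst (asm) sum_nonneg_eq_0_iff) auto
  moreover have "pmf (\<delta> s a b) t \<noteq> 0" "pmf (g s) a \<noteq> 0" using a t by (auto simp: set_pmf_iff)
  ultimately show ?thesis by simp
qed

lemma Lop_absorb:
  assumes abs: "\<And>a. a \<in> set_pmf (\<xi>1 s) \<Longrightarrow> \<delta> s a b = return_pmf s"
  shows "Lop \<delta> \<xi>1 b v s = v s"
proof -
  have "Lop \<delta> \<xi>1 b v s = (\<Sum>a\<in>UNIV. v s * pmf (\<xi>1 s) a)"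
    unfolding Lop_def
  proof (rule sum.cong[OF refl])
    fix a
    show "(\<Sum>t\<in>UNIV. v t * pmf (\<delta> s a b) t * pmf (\<xi>1 s) a) = v s * pmf (\<xi>1 s) a"
    proof (cases "a \<in> set_pmf (\<xi>1 s)")
      case True
      have "(\<Sum>t\<in>UNIV. v t * pmf (\<delta> s a b) t * pmf (\<xi>1 s) a) =
        (\<Sum>t\<in>UNIV. if t = s then v s * pmf (\<xi>1 s) a else 0)"
        using abs[OF True] by (intro sum.cong refl) (auto simp: indicator_def)
      then show ?thesis by simp
    next
      case False
      then show ?thesis by (simp add: set_pmf_iff)
    qed
  qed
  also have "\<dots> = v s" by (simp add: sum_distrib_left[symmetric] sum_pmf_UNIV)
  finally show ?thesis .
qed

lemma reach_zero:
  assumes nT: "\<And>s. s \<in> Z \<Longrightarrow> s \<notin> T"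
    and cl: "\<And>s a t. s \<in> Z \<Longrightarrow> a \<in> set_pmf (g s) \<Longrightarrow> t \<in> set_pmf (\<delta> s a (B s)) \<Longrightarrow> t \<in> Z"
  shows "last h \<in> Z \<Longrightarrow> reach_upto \<delta> T (mless g) (mless (\<lambda>s. return_pmf (B s))) n h = 0"
proof (induction n arbitrary: h)
  case 0
  then show ?case using nT by simp
next
  case (Suc n)
  let ?s = "last h"
  have "(\<Sum>a\<in>UNIV. \<Sum>b\<in>UNIV. \<Sum>t\<in>UNIV. pmf (mless g h) a * pmf (mless (\<lambda>s. return_pmf (B s)) h) b
      * pmf (\<delta> ?s a b) t * reach_upto \<delta> T (mless g) (mless (\<lambda>s. return_pmf (B s))) n (h @ [t])) = 0"
  proof (intro sum.neutral ballI)
    fix a b t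
    show "pmf (mless g h) a * pmf (mless (\<lambda>s. return_pmf (B s)) h) b
      * pmf (\<delta> ?s a b) t * reach_upto \<delta> T (mless g) (mless (\<lambda>s. return_pmf (B s))) n (h @ [t]) = 0"
    proof (cases "a \<in> set_pmf (g ?s) \<and> b = B ?s \<and> t \<in> set_pmf (\<delta> ?s a b)")
      case True
      then have "t \<in> Z" using cl[OF Suc.prems] by blast
      then have "reach_upto \<delta> T (mless g) (mless (\<lambda>s. return_pmf (B s))) n (h @ [t]) = 0"
        using Suc.IH[of "h @ [t]"] by simp
      then show ?thesis by simp
    next
      case False
      then show ?thesis by (auto simp: mless_def set_pmf_iff indicator_def)
    qed
  qed
  then show ?case using nT[OF Suc.prems] by simp
qed

theorem lemma8:
  fixes Gam1 Gam2 :: "'s::finite \<Rightarrow> 'm::finite set"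
    and \<delta> :: "'s \<Rightarrow> 'm \<Rightarrow> 'm \<Rightarrow> 's pmf"
    and T :: "'s set"
    and \<gamma> \<gamma>' :: "'s \<Rightarrow> 'm pmf"
  assumes ne1: "\<And>s. Gam1 s \<noteq> {}"
    and ne2: "\<And>s. Gam2 s \<noteq> {}"
    and absorbing: "\<And>s a b. s \<in> T \<union> W2 Gam1 Gam2 \<delta> T \<Longrightarrow> a \<in> Gam1 s \<Longrightarrow> b \<in> Gam2 s
                       \<Longrightarrow> \<delta> s a b = return_pmf s"
    and iter_i: "alg_iter Gam1 Gam2 \<delta> T \<gamma>"
    and iter_next: "improve_step Gam1 Gam2 \<delta> T \<gamma> \<gamma>'"
  shows "(\<forall>s. vsel Gam2 \<delta> T \<gamma>' s \<ge> Pre1 Gam1 Gam2 \<delta> (vsel Gam2 \<delta> T \<gamma>) s)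
       \<and> (\<forall>s. vsel Gam2 \<delta> T \<gamma>' s \<ge> vsel Gam2 \<delta> T \<gamma> s)
       \<and> (\<forall>s\<in>{s. Pre1 Gam1 Gam2 \<delta> (vsel Gam2 \<delta> T \<gamma>) s > vsel Gam2 \<delta> T \<gamma> s}.
            vsel Gam2 \<delta> T \<gamma>' s > vsel Gam2 \<delta> T \<gamma> s)"
proof -
  define u where "u = vsel Gam2 \<delta> T \<gamma>"
  define I' where "I' = Iprime Gam1 Gam2 \<delta> T \<gamma>"
  obtain \<xi>1 where \<xi>1: "\<xi>1 \<in> sel Gam1"
    and xe: "\<forall>s\<in>I'. Pre1_sel Gam2 \<delta> \<xi>1 u s = Pre1 Gam1 Gam2 \<delta> u s"
    and g': "\<gamma>' = (\<lambda>s. if s \<in> I' then \<xi>1 s else \<gamma> s)"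
    using iter_next unfolding improve_step_def Let_def u_def I'_def by metis
  have I'_iff: "s \<in> I' \<longleftrightarrow> s \<notin> T \<union> W2 Gam1 Gam2 \<delta> T \<and> Pre1 Gam1 Gam2 \<delta> u s > u s" for s
    unfolding I'_def Iprime_def u_def by simp
  have u_val: "u = val1_str Gam2 \<delta> T (mless \<gamma>)" unfolding u_def vsel_def ..
  have u_nn: "0 \<le> u t" for t unfolding u_val using val_bounds[OF ne2] by (rule conjunct1)
  have u_le1: "u t \<le> 1" for t unfolding u_val using val_bounds[OF ne2] by (rule conjunct2)
  define ws where "ws = (\<lambda>t. SUP n. wit \<delta> T Gam2 \<gamma>' n t)"
  have ws_u': "ws t \<le> vsel Gam2 \<delta> T \<gamma>' t" for t
    unfolding ws_def vsel_def by (rule ws_le_val[OF ne2])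
  have ws_ge: "wit \<delta> T Gam2 \<gamma>' n t \<le> ws t" for n t
    unfolding ws_def by (rule ws_bounds(1)[OF ne2])
  have ws_le1: "ws t \<le> 1" for t
    unfolding ws_def by (rule ws_bounds(2)[OF ne2])
  have ws_nn: "0 \<le> ws t" for t
    using ws_ge[of 0 t] by (cases "t \<in> T") simp_all
  have ws_T: "t \<in> T \<Longrightarrow> ws t = 1" for t
    using ws_ge[of 0 t] ws_le1[of t] by simp
  have ws_fx: "ws t = Min ((\<lambda>b. Lop \<delta> \<gamma>' b ws t) ` Gam2 t)" if nT: "t \<notin> T" for t
    unfolding ws_def by (rule ws_fix) (rule ne2, rule nT)
  have key1: "u s \<le> Lop \<delta> \<gamma>' b u s" if "s \<notin> T" "b \<in> Gam2 s" "s \<notin> I'" for s b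
  proof -
    have "u s \<le> Lop \<delta> \<gamma> b u s" unfolding u_val by (rule val_step) (rule ne2, rule that(1), rule that(2))
    also have "\<dots> = Lop \<delta> \<gamma>' b u s" by (rule Lop_same) (simp add: g' that(3))
    finally show ?thesis .
  qed
  have key2: "Pre1 Gam1 Gam2 \<delta> u s \<le> Lop \<delta> \<gamma>' b u s" if "s \<in> I'" "b \<in> Gam2 s" for s b
  proof -
    have "Pre1 Gam1 Gam2 \<delta> u s = Pre1_sel Gam2 \<delta> \<xi>1 u s" using xe that(1) by simp
    also have "\<dots> \<le> Lop \<delta> \<xi>1 b u s" by (rule Pre1_sel_le_Lop) (rule ne2, rule that(2), rule u_nn)
    also have "\<dots> = Lop \<delta> \<gamma>' b u s" by (rule Lop_same) (simp add: g' that(1))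
    finally show ?thesis .
  qed
  have u_le_ws: "u t \<le> ws t" for t
  proof (rule ccontr)
    assume "\<not> u t \<le> ws t"
    define d where "d = (\<lambda>t. u t - ws t)"
    define M where "M = Max (range d)"
    have dM: "d t' \<le> M" for t' unfolding M_def by (rule Max_ge) auto
    have Mpos: "M > 0" using dM[of t] \<open>\<not> u t \<le> ws t\<close> unfolding d_def by simp
    define Z where "Z = {s. d s = M}"
    have ZT: "s \<notin> T" if "s \<in> Z" for s
    proof
      assume "s \<in> T"
      then have "d s \<le> 0" unfolding d_def using ws_T u_le1[of s] by simp
      then show False using that Mpos unfolding Z_def by simp
    qed
    have Zb: "\<exists>b. b \<in> Gam2 s \<and> Lop \<delta> \<gamma>' b ws s = ws s" if "s \<in> Z" for s
    proof -
      have "Min ((\<lambda>b. Lop \<delta> \<gamma>' b ws s) ` Gam2 s) \<in> (\<lambda>b. Lop \<delta> \<gamma>' b ws s) ` Gam2 s"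
        by (rule Min_in) (simp_all add: ne2)
      then show ?thesis using ws_fx[OF ZT[OF that]] by auto
    qed
    define B where "B = (\<lambda>s. if s \<in> Z then SOME b. b \<in> Gam2 s \<and> Lop \<delta> \<gamma>' b ws s = ws s
        else SOME b. b \<in> Gam2 s)"
    have B: "B s \<in> Gam2 s" for s
    proof (cases "s \<in> Z")
      case True
      show ?thesis using someI_ex[OF Zb[OF True]] True unfolding B_def by simp
    next
      case False
      have "\<exists>b. b \<in> Gam2 s" using ne2[of s] by auto
      from someI_ex[OF this] show ?thesis using False unfolding B_def by simp
    qed
    have BZ: "Lop \<delta> \<gamma>' (B s) ws s = ws s" if "s \<in> Z" for s
      using someI_ex[OF Zb[OF that]] that unfolding B_def by simp
    have Zprops: "s \<notin> I' \<and> (\<forall>a t. a \<in> set_pmf (\<gamma> s) \<longrightarrow> t \<in> set_pmf (\<delta> s a (B s)) \<longrightarrow> t \<in> Z)"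
      if sZ: "s \<in> Z" for s
    proof -
      have ds: "d s = M" using sZ unfolding Z_def by simp
      have LdM: "Lop \<delta> \<gamma>' (B s) d s \<le> M" by (rule Lop_le) (rule dM)
      have Ld: "Lop \<delta> \<gamma>' (B s) d s = Lop \<delta> \<gamma>' (B s) u s - ws s"
        unfolding d_def Lop_diff BZ[OF sZ] ..
      have nI: "s \<notin> I'"
      proof
        assume sI: "s \<in> I'"
        have "u s < Pre1 Gam1 Gam2 \<delta> u s" using sI I'_iff by simp
        also have "\<dots> \<le> Lop \<delta> \<gamma>' (B s) u s" by (rule key2[OF sI B])
        finally have "d s < Lop \<delta> \<gamma>' (B s) d s" using Ld unfolding d_def by simp
        then show False using LdM ds by simp
      qed
      have gs: "\<gamma>' s = \<gamma> s" using nI g' by simp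
      have "u s \<le> Lop \<delta> \<gamma>' (B s) u s" by (rule key1[OF ZT[OF sZ] B nI])
      then have "M \<le> Lop \<delta> \<gamma>' (B s) d s" using Ld ds unfolding d_def by simp
      then have L0: "Lop \<delta> \<gamma>' (B s) (\<lambda>t. M - d t) s \<le> 0"
        using Lop_diff[of \<delta> \<gamma>' "B s" "\<lambda>_. M" d s] Lop_const[of \<delta> \<gamma>' "B s" M s] by simp
      have "t \<in> Z" if a: "a \<in> set_pmf (\<gamma> s)" and t: "t \<in> set_pmf (\<delta> s a (B s))" for a t
      proof -
        have "M - d t = 0"
          by (rule Lop_zero[where v="\<lambda>t. M - d t", OF _ L0 _ t]) (use dM a gs in auto)
        then show ?thesis unfolding Z_def by simp
      qed
      then show ?thesis using nI by blast
    qed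
    obtain s0 where s0: "d s0 = M"
    proof -
      have "M \<in> range d" unfolding M_def by (rule Max_in) auto
      then show ?thesis using that by auto
    qed
    then have s0Z: "s0 \<in> Z" unfolding Z_def by simp
    define \<pi>2 where "\<pi>2 = mless (\<lambda>s. return_pmf (B s))"
    have \<pi>2s: "\<pi>2 \<in> strat Gam2" unfolding \<pi>2_def strat_def mless_def using B by simp
    have r0: "reach_upto \<delta> T (mless \<gamma>) \<pi>2 n [s0] = 0" for n
      unfolding \<pi>2_def
      by (rule reach_zero[where Z=Z]) (use ZT Zprops s0Z in auto)
    have "u s0 \<le> reach_prob \<delta> T (mless \<gamma>) \<pi>2 s0" unfolding u_val by (rule val_le_reach[OF \<pi>2s])
    also have "\<dots> = 0" unfolding reach_prob_def r0 by simp
    finally have "u s0 \<le> 0" .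
    then show False using s0 Mpos ws_nn[of s0] unfolding d_def by simp
  qed
  have part1: "Pre1 Gam1 Gam2 \<delta> u s \<le> vsel Gam2 \<delta> T \<gamma>' s" for s
  proof (cases "s \<in> I'")
    case True
    then have nT: "s \<notin> T" using I'_iff by simp
    have "Pre1 Gam1 Gam2 \<delta> u s \<le> Min ((\<lambda>b. Lop \<delta> \<gamma>' b ws s) ` Gam2 s)"
    proof (rule Min_img_ge[OF ne2])
      fix b assume b: "b \<in> Gam2 s"
      have "Pre1 Gam1 Gam2 \<delta> u s \<le> Lop \<delta> \<gamma>' b u s" by (rule key2[OF True b])
      also have "\<dots> \<le> Lop \<delta> \<gamma>' b ws s" by (rule Lop_mono) (rule u_le_ws)
      finally show "Pre1 Gam1 Gam2 \<delta> u s \<le> Lop \<delta> \<gamma>' b ws s" .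
    qed
    also have "\<dots> = ws s" using ws_fx[OF nT] by simp
    also have "\<dots> \<le> vsel Gam2 \<delta> T \<gamma>' s" by (rule ws_u')
    finally show ?thesis .
  next
    case nI: False
    have "Pre1 Gam1 Gam2 \<delta> u s \<le> u s"
    proof (cases "s \<in> T \<union> W2 Gam1 Gam2 \<delta> T")
      case False
      then show ?thesis using nI I'_iff by simp
    next
      case TW: True
      have ne: "sel Gam1 \<noteq> {}" using sel_unif[of Gam1, OF ne1] by (rule ne_lemma)
      show ?thesis unfolding Pre1_def
      proof (rule cSUP_least[OF ne])
        fix \<xi> assume \<xi>: "\<xi> \<in> sel Gam1"
        have "Pre1_sel Gam2 \<delta> \<xi> u s \<le> Pre_pair \<delta> \<xi> (\<lambda>s'. pmf_of_set (Gam2 s')) u s"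
          by (rule Pre1_sel_le[OF sel_unif[OF ne2] u_nn])
        also have "\<dots> = (\<Sum>b\<in>UNIV. pmf (pmf_of_set (Gam2 s)) b * u s)"
          unfolding Pre_pair_Lop
        proof (rule sum.cong[OF refl])
          fix b
          show "pmf (pmf_of_set (Gam2 s)) b * Lop \<delta> \<xi> b u s = pmf (pmf_of_set (Gam2 s)) b * u s"
          proof (cases "b \<in> Gam2 s")
            case True
            have "Lop \<delta> \<xi> b u s = u s"
            proof (rule Lop_absorb)
              fix a assume "a \<in> set_pmf (\<xi> s)"
              then have "a \<in> Gam1 s" using \<xi> unfolding sel_def by auto
              then show "\<delta> s a b = return_pmf s" by (rule absorbing[OF TW _ True])
            qed
            then show ?thesis by simp
          next
            case False
            then show ?thesis by (simp add: ne2)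
          qed
        qed
        also have "\<dots> = u s" by (simp add: sum_distrib_right[symmetric] sum_pmf_UNIV)
        finally show "Pre1_sel Gam2 \<delta> \<xi> u s \<le> u s" .
      qed
    qed
    also have "\<dots> \<le> ws s" by (rule u_le_ws)
    also have "\<dots> \<le> vsel Gam2 \<delta> T \<gamma>' s" by (rule ws_u')
    finally show ?thesis .
  qed
  have part2: "u s \<le> vsel Gam2 \<delta> T \<gamma>' s" for s
    using u_le_ws[of s] ws_u'[of s] by simp
  have part3: "u s < vsel Gam2 \<delta> T \<gamma>' s" if "Pre1 Gam1 Gam2 \<delta> u s > u s" for s
    using part1[of s] that by simp
  show ?thesis using part1 part2 part3 unfolding u_def by auto
qed

end
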